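(* Let $X$ be a set and $\{d_r\colon X\times X\to\mathbb{R}_{\ge 0}\cup\{\infty\}\}_{r>0}$ a family of functions satisfying the Self-distance Axiom, Upper semi-continuity and the Weak triangle inequality (as described in the context). Equip $X$ with the topology having as basis the sets $N_r^{\varepsilon}(x)=\{y\in X\mid d_r(x,y)<\varepsilon\}$ for $x\in X$, $r>0$, $\varepsilon>0$. Then for every $x\in X$ and every $r>0$, the function \[ d_r(x,\cdot)\colon X\to\mathbb{R}_{\ge0}\cup\{\infty\},\quad y\mapsto d_r(x,y) \] is upper semi-continuous.
   Context: The axioms, required for all $x,y,z\in X$: (Self-distance Axiom) $d_r(x,x)=0$ for all $r>0$. (Upper semi-continuity) if $r_1\le r_2$ then $d_{r_1}(x,y)\le d_{r_2}(x,y)$; and if $d_r(x,y)<\varepsilon$ then there exists $\delta>0$ with $d_{r+\delta}(x,y)<\varepsilon$. (Weak triangle inequality) for $r_1,r_2,r_3>0$, if $d_{r_1+r_2}(x,y)<r_3$ and $d_{r_1+r_2+r_3}(y,z)<r_2$, then $d_{r_1}(x,z)\le d_{r_1+r_2}(x,y)+d_{r_1+r_2+r_3}(y,z)$. The functions $d_r$ need not be symmetric. Under these axioms the sets $N_r^\varepsilon(x)$ form a basis of a topology on $X$. *)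

theory Defs
  imports "HOL-Analysis.Analysis"
begin

text \<open>A family of functions d r : X \<times> X \<rightarrow> [0,\<infinity>], indexed by r > 0, modelled as
  d :: real \<Rightarrow> 'a \<Rightarrow> 'a \<Rightarrow> ennreal; only values with r > 0 and points in X matter.\<close>

definition self_distance_axiom :: "'a set \<Rightarrow> (real \<Rightarrow> 'a \<Rightarrow> 'a \<Rightarrow> ennreal) \<Rightarrow> bool" where
  "self_distance_axiom X d \<longleftrightarrow> (\<forall>x\<in>X. \<forall>r>0. d r x x = 0)"

definition upper_semicont_axiom :: "'a set \<Rightarrow> (real \<Rightarrow> 'a \<Rightarrow> 'a \<Rightarrow> ennreal) \<Rightarrow> bool" where
  "upper_semicont_axiom X d \<longleftrightarrow>
     (\<forall>x\<in>X. \<forall>y\<in>X.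
        (\<forall>r1 r2. 0 < r1 \<and> r1 \<le> r2 \<longrightarrow> d r1 x y \<le> d r2 x y) \<and>
        (\<forall>r>0. \<forall>\<epsilon>::real. \<epsilon> > 0 \<and> d r x y < ennreal \<epsilon> \<longrightarrow>
            (\<exists>\<delta>>0. d (r + \<delta>) x y < ennreal \<epsilon>)))"

definition weak_triangle_axiom :: "'a set \<Rightarrow> (real \<Rightarrow> 'a \<Rightarrow> 'a \<Rightarrow> ennreal) \<Rightarrow> bool" where
  "weak_triangle_axiom X d \<longleftrightarrow>
     (\<forall>x\<in>X. \<forall>y\<in>X. \<forall>z\<in>X. \<forall>r1 r2 r3. 0 < r1 \<and> 0 < r2 \<and> 0 < r3 \<longrightarrow>
        d (r1 + r2) x y < ennreal r3 \<longrightarrow> d (r1 + r2 + r3) y z < ennreal r2 \<longrightarrow>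
        d r1 x z \<le> d (r1 + r2) x y + d (r1 + r2 + r3) y z)"

definition nbhd :: "'a set \<Rightarrow> (real \<Rightarrow> 'a \<Rightarrow> 'a \<Rightarrow> ennreal) \<Rightarrow> real \<Rightarrow> real \<Rightarrow> 'a \<Rightarrow> 'a set" where
  "nbhd X d r \<epsilon> x = {y \<in> X. d r x y < ennreal \<epsilon>}"

definition dr_topology :: "'a set \<Rightarrow> (real \<Rightarrow> 'a \<Rightarrow> 'a \<Rightarrow> ennreal) \<Rightarrow> 'a topology" where
  "dr_topology X d = topology_generated_by
      {nbhd X d r \<epsilon> x | x r \<epsilon>. x \<in> X \<and> r > 0 \<and> \<epsilon> > 0}"

definition upper_semicontinuous_on_top :: "'a topology \<Rightarrow> ('a \<Rightarrow> ennreal) \<Rightarrow> bool" where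
  "upper_semicontinuous_on_top T f \<longleftrightarrow>
     (\<forall>y\<in>topspace T. \<forall>c. f y < c \<longrightarrow> (\<exists>U. openin T U \<and> y \<in> U \<and> (\<forall>z\<in>U. f z < c)))"

end

theory Submission
  imports Defs
begin

lemma key:
  fixes X :: "'a set" and d :: "real \<Rightarrow> 'a \<Rightarrow> 'a \<Rightarrow> ennreal"
  assumes sd: "self_distance_axiom X d"
    and us: "upper_semicont_axiom X d"
    and wt: "weak_triangle_axiom X d"
    and x: "x \<in> X" and r: "r > 0" and y: "y \<in> X" and e: "e > 0"
    and lt: "d r x y < ennreal e"
  shows "\<exists>U. openin (dr_topology X d) U \<and> y \<in> U \<and> (\<forall>z\<in>U. d r x z < ennreal e)"
proof -
  obtain \<delta> where dp: "\<delta> > 0" and dl: "d (r + \<delta>) x y < ennreal e"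
    using us lt x y r e unfolding upper_semicont_axiom_def by blast
  obtain t where t: "d (r + \<delta>) x y = ennreal t" "0 \<le> t"
    using dl by (cases "d (r + \<delta>) x y") (auto simp: ennreal_less_top)
  have te: "t < e" using dl t by (simp add: ennreal_less_iff)
  define r2 where "r2 = min \<delta> ((e - t) / 2)"
  have r2p: "r2 > 0" using dp te by (simp add: r2_def)
  have mono: "d (r + r2) x y \<le> d (r + \<delta>) x y"
  proof -
    have "0 < r + r2" using r r2p by simp
    have "r + r2 \<le> r + \<delta>" by (simp add: r2_def)
    with \<open>0 < r + r2\<close> show ?thesis using us x y unfolding upper_semicont_axiom_def by blast
  qed
  have A: "d (r + r2) x y \<le> ennreal t" using mono t by simp
  have A2: "d (r + r2) x y < ennreal e" using A te t
    by (meson ennreal_lessI e le_less_trans)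
  define U where "U = nbhd X d (r + r2 + e) r2 y"
  have op: "openin (dr_topology X d) U"
    unfolding dr_topology_def U_def
    proof (rule topology_generated_by_Basis)
    have "0 < r + r2 + e" using r r2p e by simp
    thus "nbhd X d (r + r2 + e) r2 y \<in> {nbhd X d r \<epsilon> x | x r \<epsilon>. x \<in> X \<and> r > 0 \<and> \<epsilon> > 0}"
      using y r2p by blast
  qed
  have yU: "y \<in> U" using sd y r r2p e unfolding U_def nbhd_def self_distance_axiom_def by simp
  have "\<forall>z\<in>U. d r x z < ennreal e"
  proof
    fix z assume z: "z \<in> U"
    hence zX: "z \<in> X" and B: "d (r + r2 + e) y z < ennreal r2" by (auto simp: U_def nbhd_def)
    have "d r x z \<le> d (r + r2) x y + d (r + r2 + e) y z"
      using wt x y zX r r2p e A2 B unfolding weak_triangle_axiom_def by blast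
    also have "\<dots> < ennreal t + ennreal r2"
    proof -
      have "d (r + r2) x y + d (r + r2 + e) y z \<le> ennreal t + d (r + r2 + e) y z"
        using A by (rule add_right_mono)
      also have "\<dots> < ennreal t + ennreal r2"
        using B by (simp add: ennreal_add_left_cancel_less)
      finally show ?thesis .
    qed
    also have "\<dots> = ennreal (t + r2)" using t r2p by (simp add: ennreal_plus)
    also have "\<dots> \<le> ennreal e" proof (rule ennreal_leI)
      have "r2 \<le> (e - t) / 2" unfolding r2_def by (rule min.cobounded2)
      thus "t + r2 \<le> e" using te by argo
    qed
    finally show "d r x z < ennreal e" .
  qed
  thus ?thesis using op yU by blast
qed

theorem corollary2p5:
  fixes X :: "'a set" and d :: "real \<Rightarrow> 'a \<Rightarrow> 'a \<Rightarrow> ennreal"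
  assumes "self_distance_axiom X d"
    and "upper_semicont_axiom X d"
    and "weak_triangle_axiom X d"
    and "x \<in> X" and "r > 0"
  shows "upper_semicontinuous_on_top (dr_topology X d) (\<lambda>y. d r x y)"
  unfolding upper_semicontinuous_on_top_def
proof (intro ballI allI impI)
  fix y c assume yT: "y \<in> topspace (dr_topology X d)" and lt: "d r x y < c"
  have y: "y \<in> X" using yT unfolding dr_topology_def by (auto simp: nbhd_def)
  obtain e where e: "e > 0" "d r x y < ennreal e" "ennreal e \<le> c"
  proof (cases c)
    case (real c')
    then show ?thesis using lt that[of c'] by (cases "c' > 0") (auto simp: ennreal_neg)
  next
    case top
    obtain a where a: "d r x y = ennreal a" "a \<ge> 0"
      using lt top by (cases "d r x y") auto
    show ?thesis using that[of "a + 1"] a top by (auto simp: ennreal_less_iff)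
  qed
  from key[OF assms(1-5) y e(1,2)] obtain U where
    "openin (dr_topology X d) U" "y \<in> U" "\<forall>z\<in>U. d r x z < ennreal e" by blast
  thus "\<exists>U. openin (dr_topology X d) U \<and> y \<in> U \<and> (\<forall>z\<in>U. d r x z < c)"
    using e(3) by (meson order.strict_trans2)
qed

end
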